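(* Let $H$ be a finite loopless graph with a marked vertex $v_0$ and $L$ a finite graph with at least $\deg_H(v_0)$ vertices. Let $G$ be obtained from $H$ by deleting $v_0$, adding a disjoint copy of $L$, and attaching each edge of $H$ formerly incident to $v_0$ to a vertex of $L$, distinct edges to distinct vertices. If every two bases of $M(H)$ intersect and every two bases of $M^\star(L)$ intersect, then every two bases of $M(G)$ intersect and every two bases of $M(G)^\star$ intersect.
   Context: $M(K)$ denotes the graphic (cycle) matroid of a graph $K$, whose bases are the edge sets of maximal spanning forests; $M^\star(K)$ is its dual. *)

theory Defs
  imports Main
begin

text \<open>Finite multigraphs: vertex set V, edge set E, and an incidence map giving
  for each edge its set of end vertices (one vertex for a loop, two otherwise).
  Parallel edges are allowed.\<close>

definition graph :: "'v set \<Rightarrow> 'e set \<Rightarrow> ('e \<Rightarrow> 'v set) \<Rightarrow> bool" where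
  "graph V E inc \<longleftrightarrow> finite V \<and> finite E \<and>
     (\<forall>e\<in>E. inc e \<subseteq> V \<and> inc e \<noteq> {} \<and> card (inc e) \<le> 2)"

definition loopless :: "'e set \<Rightarrow> ('e \<Rightarrow> 'v set) \<Rightarrow> bool" where
  "loopless E inc \<longleftrightarrow> (\<forall>e\<in>E. card (inc e) = 2)"

definition adj_rel :: "('e \<Rightarrow> 'v set) \<Rightarrow> 'e set \<Rightarrow> 'v rel" where
  "adj_rel inc F = {(x, y). \<exists>e\<in>F. x \<in> inc e \<and> y \<in> inc e}"

text \<open>F contains a cycle: some edge e of F is a loop, or its two ends are joined
  by a path in F - {e} (so e closes a cycle).\<close>
definition has_cycle :: "('e \<Rightarrow> 'v set) \<Rightarrow> 'e set \<Rightarrow> bool" where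
  "has_cycle inc F \<longleftrightarrow>
     (\<exists>e\<in>F. \<forall>u\<in>inc e. \<forall>w\<in>inc e. (u, w) \<in> (adj_rel inc (F - {e}))\<^sup>*)"

definition forest_edges :: "('e \<Rightarrow> 'v set) \<Rightarrow> 'e set \<Rightarrow> bool" where
  "forest_edges inc F \<longleftrightarrow> \<not> has_cycle inc F"

definition graphic_basis :: "'e set \<Rightarrow> ('e \<Rightarrow> 'v set) \<Rightarrow> 'e set \<Rightarrow> bool" where
  "graphic_basis E inc B \<longleftrightarrow> B \<subseteq> E \<and> forest_edges inc B \<and>
     (\<forall>B'. B \<subseteq> B' \<and> B' \<subseteq> E \<and> forest_edges inc B' \<longrightarrow> B' = B)"

definition cographic_basis :: "'e set \<Rightarrow> ('e \<Rightarrow> 'v set) \<Rightarrow> 'e set \<Rightarrow> bool" where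
  "cographic_basis E inc B \<longleftrightarrow> B \<subseteq> E \<and> graphic_basis E inc (E - B)"

definition bases_intersect :: "('e set \<Rightarrow> bool) \<Rightarrow> bool" where
  "bases_intersect P \<longleftrightarrow> (\<forall>B1 B2. P B1 \<longrightarrow> P B2 \<longrightarrow> B1 \<inter> B2 \<noteq> {})"

text \<open>The graph G: delete v0 from H, add a disjoint copy of L (vertices/edges tagged Inr),
  and reattach each edge e of H formerly incident to v0 at the vertex f e of L.\<close>
definition glue_verts :: "'v set \<Rightarrow> 'v \<Rightarrow> 'w set \<Rightarrow> ('v + 'w) set" where
  "glue_verts VH v0 VL = Inl ` (VH - {v0}) \<union> Inr ` VL"

definition glue_edges :: "'e set \<Rightarrow> 'f set \<Rightarrow> ('e + 'f) set" where
  "glue_edges EH EL = Inl ` EH \<union> Inr ` EL"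

definition glue_inc :: "('e \<Rightarrow> 'v set) \<Rightarrow> ('f \<Rightarrow> 'w set) \<Rightarrow> 'v \<Rightarrow> ('e \<Rightarrow> 'w)
    \<Rightarrow> ('e + 'f) \<Rightarrow> ('v + 'w) set" where
  "glue_inc incH incL v0 f x = (case x of
      Inl e \<Rightarrow> (\<lambda>u. if u = v0 then Inr (f e) else Inl u) ` incH e
    | Inr e \<Rightarrow> Inr ` incL e)"

end

theory Submission
  imports Defs
begin

lemma adj_mono: "F \<subseteq> F' \<Longrightarrow> adj_rel inc F \<subseteq> adj_rel inc F'"
  unfolding adj_rel_def by blast

lemma conn_mono: "F \<subseteq> F' \<Longrightarrow> (adj_rel inc F)\<^sup>* \<subseteq> (adj_rel inc F')\<^sup>*"
  by (intro rtrancl_mono adj_mono)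

lemma has_cycle_mono: "has_cycle inc F \<Longrightarrow> F \<subseteq> F' \<Longrightarrow> has_cycle inc F'"
proof -
  assume h: "has_cycle inc F" and s: "F \<subseteq> F'"
  then obtain e where e: "e \<in> F" "\<forall>u\<in>inc e. \<forall>w\<in>inc e. (u, w) \<in> (adj_rel inc (F - {e}))\<^sup>*"
    unfolding has_cycle_def by blast
  have "(adj_rel inc (F - {e}))\<^sup>* \<subseteq> (adj_rel inc (F' - {e}))\<^sup>*"
    using s by (intro conn_mono) blast
  then show ?thesis using e s unfolding has_cycle_def by blast
qed

lemma forest_subset: "forest_edges inc F' \<Longrightarrow> F \<subseteq> F' \<Longrightarrow> forest_edges inc F"
  unfolding forest_edges_def using has_cycle_mono by blast

lemma conn_sym: "(x, y) \<in> (adj_rel inc F)\<^sup>* \<Longrightarrow> (y, x) \<in> (adj_rel inc F)\<^sup>*"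
proof -
  have "sym (adj_rel inc F)" unfolding adj_rel_def sym_def by blast
  then have "sym ((adj_rel inc F)\<^sup>*)" by (rule sym_rtrancl)
  then show "(x, y) \<in> (adj_rel inc F)\<^sup>* \<Longrightarrow> (y, x) \<in> (adj_rel inc F)\<^sup>*"
    unfolding sym_def by blast
qed

lemma conn_insert:
  assumes "(a, b) \<in> (adj_rel inc (insert e F))\<^sup>*"
  shows "(a, b) \<in> (adj_rel inc F)\<^sup>* \<or>
    (\<exists>p\<in>inc e. \<exists>q\<in>inc e. (a, p) \<in> (adj_rel inc F)\<^sup>* \<and> (q, b) \<in> (adj_rel inc F)\<^sup>*)"
  using assms
proof (induction rule: rtrancl_induct)
  case base
  then show ?case by simp
next
  case (step b c)
  from step.hyps(2) obtain d where d: "d \<in> insert e F" "b \<in> inc d" "c \<in> inc d"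
    unfolding adj_rel_def by blast
  show ?case
  proof (cases "d \<in> F")
    case True
    then have bc: "(b, c) \<in> adj_rel inc F" using d unfolding adj_rel_def by blast
    from step.IH show ?thesis
    proof
      assume "(a, b) \<in> (adj_rel inc F)\<^sup>*"
      then show ?thesis using bc by (meson rtrancl.rtrancl_into_rtrancl)
    next
      assume "\<exists>p\<in>inc e. \<exists>q\<in>inc e. (a, p) \<in> (adj_rel inc F)\<^sup>* \<and> (q, b) \<in> (adj_rel inc F)\<^sup>*"
      then show ?thesis using bc by (meson rtrancl.rtrancl_into_rtrancl)
    qed
  next
    case False
    then have de: "d = e" using d by blast
    from step.IH show ?thesis
    proof
      assume "(a, b) \<in> (adj_rel inc F)\<^sup>*"
      then show ?thesis using d de by blast
    next
      assume "\<exists>p\<in>inc e. \<exists>q\<in>inc e. (a, p) \<in> (adj_rel inc F)\<^sup>* \<and> (q, b) \<in> (adj_rel inc F)\<^sup>*"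
      then show ?thesis using d de by blast
    qed
  qed
qed

lemma extend_basis:
  assumes "finite E" "F \<subseteq> E" "forest_edges inc F"
  shows "\<exists>B. F \<subseteq> B \<and> graphic_basis E inc B"
proof -
  let ?S = "{B. F \<subseteq> B \<and> B \<subseteq> E \<and> forest_edges inc B}"
  have "?S \<subseteq> Pow E" by blast
  then have "finite ?S" using assms(1) finite_Pow_iff finite_subset by metis
  moreover have "F \<in> ?S" using assms by blast
  then have "?S \<noteq> {}" by blast
  ultimately obtain m where m: "m \<in> ?S" "\<forall>b\<in>?S. m \<le> b \<longrightarrow> m = b"
    using finite_has_maximal[of ?S] by blast
  have "graphic_basis E inc m" unfolding graphic_basis_def
  proof (intro conjI allI impI)
    show "m \<subseteq> E" "forest_edges inc m" using m(1) by blast+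
  next
    fix B' assume "m \<subseteq> B' \<and> B' \<subseteq> E \<and> forest_edges inc B'"
    then have "B' \<in> ?S" "m \<le> B'" using m(1) by blast+
    then show "B' = m" using m(2) by blast
  qed
  then show ?thesis using m(1) by blast
qed

lemma span:
  assumes fin: "\<forall>e\<in>E. finite (inc e) \<and> card (inc e) \<le> 2"
    and B: "graphic_basis E inc B" and e: "e \<in> E" and u: "u \<in> inc e" and w: "w \<in> inc e"
  shows "(u, w) \<in> (adj_rel inc B)\<^sup>*"
proof (cases "e \<in> B")
  case True
  then have "(u, w) \<in> adj_rel inc B" using u w unfolding adj_rel_def by blast
  then show ?thesis by (rule r_into_rtrancl)
next
  case False
  have BE: "B \<subseteq> E" and fB: "forest_edges inc B"
    and mx: "\<forall>B'. B \<subseteq> B' \<and> B' \<subseteq> E \<and> forest_edges inc B' \<longrightarrow> B' = B"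
    using B unfolding graphic_basis_def by auto
  have "insert e B \<noteq> B" using False by blast
  then have "\<not> forest_edges inc (insert e B)" using mx[rule_format, of "insert e B"] BE e by blast
  then obtain e' where e': "e' \<in> insert e B"
    "\<forall>u\<in>inc e'. \<forall>w\<in>inc e'. (u, w) \<in> (adj_rel inc (insert e B - {e'}))\<^sup>*"
    unfolding forest_edges_def has_cycle_def by blast
  show ?thesis
  proof (cases "e' = e")
    case True
    then have "insert e B - {e'} = B" using False by blast
    then show ?thesis using e'(2) True u w by metis
  next
    case ne: False
    then have e'B: "e' \<in> B" using e' by blast
    let ?C = "(adj_rel inc (B - {e'}))\<^sup>*"
    obtain u' w' where uw': "u' \<in> inc e'" "w' \<in> inc e'" "(u', w') \<notin> ?C"
      using fB e'B unfolding forest_edges_def has_cycle_def by blast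
    have "insert e B - {e'} = insert e (B - {e'})" using ne by blast
    moreover have "(u', w') \<in> (adj_rel inc (insert e B - {e'}))\<^sup>*" using e'(2) uw'(1,2) by blast
    ultimately have "(u', w') \<in> (adj_rel inc (insert e (B - {e'})))\<^sup>*" by simp
    from conn_insert[OF this] uw'(3) obtain p q where pq: "p \<in> inc e" "q \<in> inc e" "(u', p) \<in> ?C" "(q, w') \<in> ?C"
      by blast
    have CB: "?C \<subseteq> (adj_rel inc B)\<^sup>*" by (rule conn_mono) blast
    have pnq: "p \<noteq> q"
    proof
      assume "p = q"
      have "(u', w') \<in> ?C" using rtrancl_trans[OF pq(3) pq(4)[folded \<open>p = q\<close>]] .
      then show False using uw'(3) by blast
    qed
    have sub: "{p, q} \<subseteq> inc e" using pq by blast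
    have c2: "card {p, q} = 2" using pnq by simp
    have fe: "finite (inc e)" "card (inc e) \<le> 2" using fin e by auto
    have ince: "inc e = {p, q}"
      using card_seteq[OF fe(1) sub] c2 fe(2) by simp
    have a1: "(u', w') \<in> (adj_rel inc B)" using uw' e'B unfolding adj_rel_def by blast
    have a2: "(p, u') \<in> (adj_rel inc B)\<^sup>*" using conn_sym[OF subsetD[OF CB pq(3)]] .
    have a3: "(w', q) \<in> (adj_rel inc B)\<^sup>*" using conn_sym[OF subsetD[OF CB pq(4)]] .
    have pq1: "(p, q) \<in> (adj_rel inc B)\<^sup>*"
      using a2 a1 a3 by (meson r_into_rtrancl rtrancl_trans)
    have pq2: "(q, p) \<in> (adj_rel inc B)\<^sup>*" using pq1 by (rule conn_sym)
    have "u \<in> {p, q}" "w \<in> {p, q}" using u w ince by auto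
    then show ?thesis by (elim insertE emptyE) (simp_all add: pq1 pq2)
  qed
qed

lemma conn_sub:
  assumes "\<forall>d\<in>D. \<forall>u\<in>inc d. \<forall>w\<in>inc d. (u, w) \<in> (adj_rel inc B)\<^sup>*"
  shows "(adj_rel inc D)\<^sup>* \<subseteq> (adj_rel inc B)\<^sup>*"
  by (rule rtrancl_subset_rtrancl) (use assms in \<open>auto simp: adj_rel_def\<close>)

lemma basis_in_span:
  assumes DE: "D \<subseteq> E" and fin: "\<forall>e\<in>D. finite (inc e) \<and> card (inc e) \<le> 2"
    and B: "graphic_basis D inc B"
    and sp: "\<forall>e\<in>E. \<forall>u\<in>inc e. \<forall>w\<in>inc e. (u, w) \<in> (adj_rel inc D)\<^sup>*"
  shows "graphic_basis E inc B"
proof -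
  have BD: "B \<subseteq> D" and fB: "forest_edges inc B" using B unfolding graphic_basis_def by auto
  have CB: "(adj_rel inc D)\<^sup>* \<subseteq> (adj_rel inc B)\<^sup>*"
    using span[OF fin B] by (intro conn_sub) blast
  have "B' = B" if h: "B \<subseteq> B'" "B' \<subseteq> E" "forest_edges inc B'" for B'
  proof (rule ccontr)
    assume "B' \<noteq> B"
    then obtain e where e: "e \<in> B'" "e \<notin> B" using h by blast
    have "(adj_rel inc B)\<^sup>* \<subseteq> (adj_rel inc (B' - {e}))\<^sup>*" using h e by (intro conn_mono) blast
    then have "\<forall>u\<in>inc e. \<forall>w\<in>inc e. (u, w) \<in> (adj_rel inc (B' - {e}))\<^sup>*"
      using sp e h CB by blast
    then have "has_cycle inc B'" using e unfolding has_cycle_def by blast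
    then show False using h unfolding forest_edges_def by blast
  qed
  then show ?thesis using BD DE fB unfolding graphic_basis_def by blast
qed

lemma proj:
  assumes "(a, b) \<in> (adj_rel (glue_inc incH incL v0 f) B)\<^sup>*"
  shows "(case_sum id (\<lambda>_. v0) a, case_sum id (\<lambda>_. v0) b) \<in> (adj_rel incH {e. Inl e \<in> B})\<^sup>*"
  using assms
proof (induction rule: rtrancl_induct)
  case base
  then show ?case by simp
next
  case (step b c)
  let ?p = "case_sum id (\<lambda>_. v0) :: 'a + 'b \<Rightarrow> 'a"
  from step.hyps(2) obtain x where x: "x \<in> B" "b \<in> glue_inc incH incL v0 f x" "c \<in> glue_inc incH incL v0 f x"
    unfolding adj_rel_def by blast
  have "(?p b, ?p c) \<in> (adj_rel incH {e. Inl e \<in> B})\<^sup>*"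
  proof (cases x)
    case (Inl e)
    then obtain u w where uw: "u \<in> incH e" "w \<in> incH e"
      "b = (if u = v0 then Inr (f e) else Inl u)" "c = (if w = v0 then Inr (f e) else Inl w)"
      using x unfolding glue_inc_def by auto
    have "?p b = u" "?p c = w" using uw(3,4) by auto
    moreover have "(u, w) \<in> adj_rel incH {e. Inl e \<in> B}"
      using uw x(1) Inl unfolding adj_rel_def by blast
    ultimately show ?thesis by (metis r_into_rtrancl)
  next
    case (Inr e)
    then have "?p b = v0" "?p c = v0" using x unfolding glue_inc_def by auto
    then show ?thesis by simp
  qed
  then show ?case using step.IH by (rule rtrancl_trans[rotated])
qed

lemma inr_conn:
  assumes "(u, w) \<in> (adj_rel incL F)\<^sup>*"
  shows "(Inr u, Inr w) \<in> (adj_rel (glue_inc incH incL v0 f) (Inr ` F))\<^sup>*"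
  using assms
proof (induction rule: rtrancl_induct)
  case base
  then show ?case by simp
next
  case (step b c)
  from step.hyps(2) obtain d where d: "d \<in> F" "b \<in> incL d" "c \<in> incL d"
    unfolding adj_rel_def by blast
  have "(Inr b, Inr c) \<in> adj_rel (glue_inc incH incL v0 f) (Inr ` F)"
    unfolding adj_rel_def glue_inc_def using d by force
  then show ?case using step.IH by (meson rtrancl.rtrancl_into_rtrancl)
qed

lemma inr_cycle:
  assumes "has_cycle incL F"
  shows "has_cycle (glue_inc incH incL v0 f) (Inr ` F)"
proof -
  obtain e where e: "e \<in> F" "\<forall>u\<in>incL e. \<forall>w\<in>incL e. (u, w) \<in> (adj_rel incL (F - {e}))\<^sup>*"
    using assms unfolding has_cycle_def by blast
  have eq: "Inr ` F - {Inr e} = Inr ` (F - {e})" by auto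
  have "\<forall>u\<in>glue_inc incH incL v0 f (Inr e). \<forall>w\<in>glue_inc incH incL v0 f (Inr e).
     (u, w) \<in> (adj_rel (glue_inc incH incL v0 f) (Inr ` F - {Inr e}))\<^sup>*"
  proof (intro ballI)
    fix a b assume a: "a \<in> glue_inc incH incL v0 f (Inr e)" and b: "b \<in> glue_inc incH incL v0 f (Inr e)"
    then obtain u w where uw: "a = Inr u" "b = Inr w" "u \<in> incL e" "w \<in> incL e"
      by (auto simp: glue_inc_def)
    have "(u, w) \<in> (adj_rel incL (F - {e}))\<^sup>*" using e(2) uw(3,4) by blast
    from inr_conn[OF this, of incH v0 f] show "(a, b) \<in> (adj_rel (glue_inc incH incL v0 f) (Inr ` F - {Inr e}))\<^sup>*"
      unfolding eq uw(1,2) .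
  qed
  then show ?thesis unfolding has_cycle_def using e(1) by blast
qed

theorem proposition6p4:
  fixes VH :: "'v set" and EH :: "'e set" and incH :: "'e \<Rightarrow> 'v set" and v0 :: 'v
    and VL :: "'w set" and EL :: "'f set" and incL :: "'f \<Rightarrow> 'w set"
    and f :: "'e \<Rightarrow> 'w"
  assumes "graph VH EH incH" and "loopless EH incH" and "v0 \<in> VH"
    and "graph VL EL incL"
    and "card VL \<ge> card {e \<in> EH. v0 \<in> incH e}"
    and "f ` {e \<in> EH. v0 \<in> incH e} \<subseteq> VL"
    and "inj_on f {e \<in> EH. v0 \<in> incH e}"
    and "bases_intersect (graphic_basis EH incH)"
    and "bases_intersect (cographic_basis EL incL)"
  shows "bases_intersect (graphic_basis (glue_edges EH EL) (glue_inc incH incL v0 f))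
       \<and> bases_intersect (cographic_basis (glue_edges EH EL) (glue_inc incH incL v0 f))"
proof
  let ?E = "glue_edges EH EL" and ?i = "glue_inc incH incL v0 f"
  have finH: "finite EH" and finL: "finite EL" using assms(1,4) unfolding graph_def by auto
  have cH: "\<forall>e\<in>EH. finite (incH e) \<and> card (incH e) \<le> 2"
    using assms(1) unfolding graph_def by (meson finite_subset)
  have cL: "\<forall>e\<in>EL. finite (incL e) \<and> card (incL e) \<le> 2"
    using assms(4) unfolding graph_def by (meson finite_subset)
  have cG: "\<forall>x\<in>?E. finite (?i x) \<and> card (?i x) \<le> 2"
  proof
    fix x assume "x \<in> ?E"
    then show "finite (?i x) \<and> card (?i x) \<le> 2"
    proof (cases x)
      case (Inl e)
      then have "e \<in> EH" using \<open>x \<in> ?E\<close> unfolding glue_edges_def by auto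
      have eq: "?i x = (\<lambda>u. if u = v0 then Inr (f e) else Inl u) ` incH e"
        using Inl unfolding glue_inc_def by simp
      have "finite (incH e)" "card (incH e) \<le> 2" using cH \<open>e \<in> EH\<close> by auto
      then show ?thesis unfolding eq using card_image_le le_trans by blast
    next
      case (Inr e)
      then have "e \<in> EL" using \<open>x \<in> ?E\<close> unfolding glue_edges_def by auto
      have eq: "?i x = Inr ` incL e"
        using Inr unfolding glue_inc_def by simp
      have "finite (incL e)" "card (incL e) \<le> 2" using cL \<open>e \<in> EL\<close> by auto
      then show ?thesis unfolding eq using card_image_le le_trans by blast
    qed
  qed
  show "bases_intersect (graphic_basis ?E ?i)"
    unfolding bases_intersect_def
  proof (intro allI impI notI)
    fix B1 B2 assume B1: "graphic_basis ?E ?i B1" and B2: "graphic_basis ?E ?i B2"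
      and dj: "B1 \<inter> B2 = {}"
    have key: "\<exists>B'. B' \<subseteq> {e. Inl e \<in> B} \<and> graphic_basis EH incH B'"
      if B: "graphic_basis ?E ?i B" for B
    proof -
      let ?D = "{e. Inl e \<in> B}"
      have BE: "B \<subseteq> ?E" using B unfolding graphic_basis_def by blast
      have DE: "?D \<subseteq> EH" using BE unfolding glue_edges_def by auto
      have sp: "\<forall>e\<in>EH. \<forall>u\<in>incH e. \<forall>w\<in>incH e. (u, w) \<in> (adj_rel incH ?D)\<^sup>*"
      proof (intro ballI)
        fix e u w assume e: "e \<in> EH" and u: "u \<in> incH e" and w: "w \<in> incH e"
        let ?phi = "\<lambda>u. if u = v0 then Inr (f e) else Inl u"
        have "Inl e \<in> ?E" using e unfolding glue_edges_def by blast
        moreover have "?phi u \<in> ?i (Inl e)" "?phi w \<in> ?i (Inl e)"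
          using u w unfolding glue_inc_def by auto
        ultimately have "(?phi u, ?phi w) \<in> (adj_rel ?i B)\<^sup>*"
          using span[OF cG B] by blast
        from proj[OF this] show "(u, w) \<in> (adj_rel incH ?D)\<^sup>*"
          by (cases "u = v0"; cases "w = v0") auto
      qed
      have "forest_edges incH {}" unfolding forest_edges_def has_cycle_def by blast
      then obtain B' where B': "graphic_basis ?D incH B'"
        using extend_basis[OF finite_subset[OF DE finH], of "{}" incH] by blast
      have "graphic_basis EH incH B'"
        using basis_in_span[OF DE _ B' sp] cH DE by blast
      moreover have "B' \<subseteq> ?D" using B' unfolding graphic_basis_def by blast
      ultimately show ?thesis by blast
    qed
    obtain C1 where C1: "C1 \<subseteq> {e. Inl e \<in> B1}" "graphic_basis EH incH C1" using key[OF B1] by blast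
    obtain C2 where C2: "C2 \<subseteq> {e. Inl e \<in> B2}" "graphic_basis EH incH C2" using key[OF B2] by blast
    have "C1 \<inter> C2 = {}" using C1(1) C2(1) dj by blast
    then show False using assms(8) C1(2) C2(2) unfolding bases_intersect_def by blast
  qed
  show "bases_intersect (cographic_basis ?E ?i)"
    unfolding bases_intersect_def
  proof (intro allI impI notI)
    fix C1 C2 assume C1: "cographic_basis ?E ?i C1" and C2: "cographic_basis ?E ?i C2"
      and dj: "C1 \<inter> C2 = {}"
    have key: "\<exists>B'. {x. Inr x \<in> ?E - C} \<subseteq> B' \<and> graphic_basis EL incL B'"
      if C: "cographic_basis ?E ?i C" for C
    proof -
      let ?F = "{x. Inr x \<in> ?E - C}"
      have B: "graphic_basis ?E ?i (?E - C)" using C unfolding cographic_basis_def by blast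
      have FL: "?F \<subseteq> EL" unfolding glue_edges_def by auto
      have "forest_edges ?i (?E - C)" using B unfolding graphic_basis_def by blast
      moreover have "Inr ` ?F \<subseteq> ?E - C" by blast
      ultimately have "forest_edges ?i (Inr ` ?F)" by (rule forest_subset)
      then have "forest_edges incL ?F" unfolding forest_edges_def using inr_cycle[of incL ?F incH v0 f] by blast
      then show ?thesis using extend_basis[OF finL FL] by blast
    qed
    obtain B1 where B1: "{x. Inr x \<in> ?E - C1} \<subseteq> B1" "graphic_basis EL incL B1" using key[OF C1] by blast
    obtain B2 where B2: "{x. Inr x \<in> ?E - C2} \<subseteq> B2" "graphic_basis EL incL B2" using key[OF C2] by blast
    have s1: "B1 \<subseteq> EL" "B2 \<subseteq> EL" using B1(2) B2(2) unfolding graphic_basis_def by auto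
    have "cographic_basis EL incL (EL - B1)" unfolding cographic_basis_def
      using B1(2) s1(1) by (simp add: Diff_Diff_Int Int_absorb1)
    moreover have "cographic_basis EL incL (EL - B2)" unfolding cographic_basis_def
      using B2(2) s1(2) by (simp add: Diff_Diff_Int Int_absorb1)
    moreover have "(EL - B1) \<inter> (EL - B2) = {}"
    proof -
      have "EL \<subseteq> B1 \<union> B2"
      proof
        fix x assume "x \<in> EL"
        then have "Inr x \<in> ?E" unfolding glue_edges_def by blast
        then have "Inr x \<in> ?E - C1 \<or> Inr x \<in> ?E - C2" using dj by blast
        then show "x \<in> B1 \<union> B2" using B1(1) B2(1) by blast
      qed
      then show ?thesis by blast
    qed
    ultimately show False using assms(9) unfolding bases_intersect_def by blast
  qed
qed

end
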